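(* Let $\mathcal{F}=(W,R,S)$ be any simplified $\mathbf{IL}^-(\mathbf{J4}_{+})$-frame. Then: (1) $\mathcal{F}\models \mathbf{J3}$, i.e. $\mathcal{F}\models (A\rhd C)\land(B\rhd C)\to(A\lor B)\rhd C$ for all formulas $A,B,C$; (2) $\mathcal{F}\models \mathbf{J4}_{+}$, i.e. $\mathcal{F}\models \Box(A\to B)\to(C\rhd A\to C\rhd B)$ for all formulas $A,B,C$; (3) $\mathcal{F}\models \mathbf{J6}$, i.e. $\mathcal{F}\models \Box\lnot A\leftrightarrow A\rhd\bot$ for all formulas $A$; (4) $\mathcal{F}\models \Box(A\to B)\to A\rhd B$ for all formulas $A,B$ if and only if $(\forall x,y\in W)(xRy\Rightarrow ySy)$; (5) $\mathcal{F}\models A\rhd(B\lor C)\land B\rhd C\to A\rhd C$ for all formulas $A,B,C$ if and only if for every $x\in W$ and all $y,z,v\in R[x]$, if $ySz$ and $zSv$ then $ySv$ (where $R[x]=\{y\in W: xRy\}$); (6) $\mathcal{F}\models \Diamond A\rhd A$ for all formulas $A$ if and only if $(\forall x,y,z\in W)(xRy \,\&\, yRz\Rightarrow ySz)$.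
   Context: Modal formulas of interpretability logic are built from propositional variables, $\top$, $\bot$ using $\to,\lor,\land$, the unary operator $\Box$ and the binary operator $\rhd$; $\lnot A$ abbreviates $A\to\bot$ and $\Diamond A:=\lnot\Box\lnot A$. A simplified $\mathbf{IL}^-(\mathbf{J4}_{+})$-frame is a triple $(W,R,S)$ where $W$ is a non-empty set, $R$ is a transitive and conversely well-founded binary relation on $W$, and $S$ is an arbitrary binary relation on $W$. A model on it is given by a forcing relation $\Vdash$ between $W$ and formulas, arbitrary on propositional variables, with the usual Boolean clauses, $x\Vdash\Box A$ iff for all $y$ with $xRy$, $y\Vdash A$, and $x\Vdash A\rhd B$ iff for every $y\in W$ with $xRy$ and $y\Vdash A$ there is $z\in W$ with $xRz$, $ySz$ and $z\Vdash B$. A formula $A$ is valid in the frame ($\mathcal{F}\models A$) if $x\Vdash A$ for every such forcing relation and every $x\in W$. *)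

theory Defs
  imports Main
begin

datatype fm =
    Var nat
  | Top
  | Bot
  | Imp fm fm
  | Or fm fm
  | And fm fm
  | Box fm
  | Rhd fm fm

definition Neg :: "fm \<Rightarrow> fm" where "Neg A = Imp A Bot"
definition Dia :: "fm \<Rightarrow> fm" where "Dia A = Neg (Box (Neg A))"
definition Iff :: "fm \<Rightarrow> fm \<Rightarrow> fm" where "Iff A B = And (Imp A B) (Imp B A)"

definition simp_frame :: "'w set \<Rightarrow> 'w rel \<Rightarrow> 'w rel \<Rightarrow> bool" where
  "simp_frame W R S \<longleftrightarrow> W \<noteq> {} \<and> R \<subseteq> W \<times> W \<and> S \<subseteq> W \<times> W \<and> trans R \<and> wf (R\<inverse>)"

primrec forces :: "'w set \<Rightarrow> 'w rel \<Rightarrow> 'w rel \<Rightarrow> (nat \<Rightarrow> 'w set) \<Rightarrow> 'w \<Rightarrow> fm \<Rightarrow> bool" where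
  "forces W R S V x (Var p) = (x \<in> V p)"
| "forces W R S V x Top = True"
| "forces W R S V x Bot = False"
| "forces W R S V x (Imp A B) = (forces W R S V x A \<longrightarrow> forces W R S V x B)"
| "forces W R S V x (Or A B) = (forces W R S V x A \<or> forces W R S V x B)"
| "forces W R S V x (And A B) = (forces W R S V x A \<and> forces W R S V x B)"
| "forces W R S V x (Box A) = (\<forall>y\<in>W. (x, y) \<in> R \<longrightarrow> forces W R S V y A)"
| "forces W R S V x (Rhd A B) =
     (\<forall>y\<in>W. (x, y) \<in> R \<and> forces W R S V y A \<longrightarrow>
        (\<exists>z\<in>W. (x, z) \<in> R \<and> (y, z) \<in> S \<and> forces W R S V z B))"

definition valid :: "'w set \<Rightarrow> 'w rel \<Rightarrow> 'w rel \<Rightarrow> fm \<Rightarrow> bool" where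
  "valid W R S A \<longleftrightarrow> (\<forall>V. \<forall>x\<in>W. forces W R S V x A)"

end

theory Submission
  imports Defs
begin

lemma p1: "valid W R S (Imp (And (Rhd A C) (Rhd B C)) (Rhd (Or A B) C))"
  unfolding valid_def by auto

lemma p2: "valid W R S (Imp (Box (Imp A B)) (Imp (Rhd C A) (Rhd C B)))"
  unfolding valid_def by fastforce

lemma p3: "valid W R S (Iff (Box (Neg A)) (Rhd A Bot))"
  unfolding valid_def Iff_def Neg_def by auto

lemma p4: "(\<forall>A B. valid W R S (Imp (Box (Imp A B)) (Rhd A B)))
           \<longleftrightarrow> (\<forall>x\<in>W. \<forall>y\<in>W. (x, y) \<in> R \<longrightarrow> (y, y) \<in> S)"
proof
  assume h: "\<forall>A B. valid W R S (Imp (Box (Imp A B)) (Rhd A B))"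
  show "\<forall>x\<in>W. \<forall>y\<in>W. (x, y) \<in> R \<longrightarrow> (y, y) \<in> S"
  proof (intro ballI impI)
    fix x y assume x: "x \<in> W" and y: "y \<in> W" and xy: "(x, y) \<in> R"
    have "forces W R S (\<lambda>_. {y}) x (Imp (Box (Imp (Var 0) (Var 0))) (Rhd (Var 0) (Var 0)))"
      using h x unfolding valid_def by blast
    then show "(y, y) \<in> S" using x y xy by auto
  qed
next
  assume "\<forall>x\<in>W. \<forall>y\<in>W. (x, y) \<in> R \<longrightarrow> (y, y) \<in> S"
  then show "\<forall>A B. valid W R S (Imp (Box (Imp A B)) (Rhd A B))"
    unfolding valid_def by fastforce
qed

lemma p5: "(\<forall>A B C. valid W R S (Imp (And (Rhd A (Or B C)) (Rhd B C)) (Rhd A C)))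
           \<longleftrightarrow> (\<forall>x\<in>W. \<forall>y\<in>R `` {x}. \<forall>z\<in>R `` {x}. \<forall>v\<in>R `` {x}.
                  (y, z) \<in> S \<and> (z, v) \<in> S \<longrightarrow> (y, v) \<in> S)"
  if fr: "simp_frame W R S"
proof
  have RW: "R \<subseteq> W \<times> W" using fr unfolding simp_frame_def by blast
  assume h: "\<forall>A B C. valid W R S (Imp (And (Rhd A (Or B C)) (Rhd B C)) (Rhd A C))"
  show "\<forall>x\<in>W. \<forall>y\<in>R `` {x}. \<forall>z\<in>R `` {x}. \<forall>v\<in>R `` {x}.
                  (y, z) \<in> S \<and> (z, v) \<in> S \<longrightarrow> (y, v) \<in> S"
  proof (intro ballI impI)
    fix x y z v assume x: "x \<in> W" and y: "y \<in> R `` {x}" and z: "z \<in> R `` {x}"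
      and v: "v \<in> R `` {x}" and s: "(y, z) \<in> S \<and> (z, v) \<in> S"
    define V where "V = (\<lambda>n::nat. if n = 0 then {y} else if n = 1 then {z} else {v})"
    have f: "forces W R S V x (Imp (And (Rhd (Var 0) (Or (Var 1) (Var 2))) (Rhd (Var 1) (Var 2))) (Rhd (Var 0) (Var 2)))"
      using h x unfolding valid_def by blast
    have yW: "y \<in> W" and zW: "z \<in> W" and vW: "v \<in> W" using y z v RW by auto
    have a1: "forces W R S V x (Rhd (Var 0) (Or (Var 1) (Var 2)))"
      using z zW s by (auto simp: V_def)
    have a2: "forces W R S V x (Rhd (Var 1) (Var 2))"
      using v vW s by (auto simp: V_def)
    have "forces W R S V x (Rhd (Var 0) (Var 2))" using f a1 a2 by simp
    then show "(y, v) \<in> S" using y yW by (auto simp: V_def)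
  qed
next
  assume h: "\<forall>x\<in>W. \<forall>y\<in>R `` {x}. \<forall>z\<in>R `` {x}. \<forall>v\<in>R `` {x}.
                  (y, z) \<in> S \<and> (z, v) \<in> S \<longrightarrow> (y, v) \<in> S"
  show "\<forall>A B C. valid W R S (Imp (And (Rhd A (Or B C)) (Rhd B C)) (Rhd A C))"
    unfolding valid_def
  proof (intro allI ballI)
    fix A B C V x assume x: "x \<in> W"
    show "forces W R S V x (Imp (And (Rhd A (Or B C)) (Rhd B C)) (Rhd A C))"
    proof (clarsimp)
      fix y assume h1: "\<forall>y\<in>W. (x, y) \<in> R \<and> forces W R S V y A \<longrightarrow>
            (\<exists>z\<in>W. (x, z) \<in> R \<and> (y, z) \<in> S \<and> (forces W R S V z B \<or> forces W R S V z C))"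
        and h2: "\<forall>y\<in>W. (x, y) \<in> R \<and> forces W R S V y B \<longrightarrow>
            (\<exists>z\<in>W. (x, z) \<in> R \<and> (y, z) \<in> S \<and> forces W R S V z C)"
        and yW: "y \<in> W" and xy: "(x, y) \<in> R" and yA: "forces W R S V y A"
      obtain z where z: "z \<in> W" "(x, z) \<in> R" "(y, z) \<in> S" and
        zBC: "forces W R S V z B \<or> forces W R S V z C" using h1 yW xy yA by blast
      show "\<exists>z\<in>W. (x, z) \<in> R \<and> (y, z) \<in> S \<and> forces W R S V z C"
      proof (cases "forces W R S V z C")
        case True then show ?thesis using z by blast
      next
        case False
        then have "forces W R S V z B" using zBC by blast
        then obtain v where v: "v \<in> W" "(x, v) \<in> R" "(z, v) \<in> S" "forces W R S V v C"
          using h2 z by blast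
        have "(y, v) \<in> S" using h x xy z v by blast
        then show ?thesis using v by blast
      qed
    qed
  qed
qed

lemma p6: "(\<forall>A. valid W R S (Rhd (Dia A) A))
           \<longleftrightarrow> (\<forall>x\<in>W. \<forall>y\<in>W. \<forall>z\<in>W. (x, y) \<in> R \<and> (y, z) \<in> R \<longrightarrow> (y, z) \<in> S)"
  if fr: "simp_frame W R S"
proof
  have tr: "trans R" using fr unfolding simp_frame_def by blast
  assume h: "\<forall>A. valid W R S (Rhd (Dia A) A)"
  show "\<forall>x\<in>W. \<forall>y\<in>W. \<forall>z\<in>W. (x, y) \<in> R \<and> (y, z) \<in> R \<longrightarrow> (y, z) \<in> S"
  proof (intro ballI impI)
    fix x y z assume x: "x \<in> W" and y: "y \<in> W" and z: "z \<in> W" and r: "(x, y) \<in> R \<and> (y, z) \<in> R"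
    have "forces W R S (\<lambda>_. {z}) x (Rhd (Dia (Var 0)) (Var 0))"
      using h x unfolding valid_def by blast
    then show "(y, z) \<in> S" using y z r by (auto simp: Dia_def Neg_def)
  qed
next
  have tr: "trans R" using fr unfolding simp_frame_def by blast
  assume h: "\<forall>x\<in>W. \<forall>y\<in>W. \<forall>z\<in>W. (x, y) \<in> R \<and> (y, z) \<in> R \<longrightarrow> (y, z) \<in> S"
  show "\<forall>A. valid W R S (Rhd (Dia A) A)"
    unfolding valid_def Dia_def Neg_def
    using h tr by simp (meson transD)
qed

theorem proposition2p13:
  fixes W :: "'w set" and R S :: "'w rel"
  assumes "simp_frame W R S"
  shows "(\<forall>A B C. valid W R S (Imp (And (Rhd A C) (Rhd B C)) (Rhd (Or A B) C)))
    \<and> (\<forall>A B C. valid W R S (Imp (Box (Imp A B)) (Imp (Rhd C A) (Rhd C B))))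
    \<and> (\<forall>A. valid W R S (Iff (Box (Neg A)) (Rhd A Bot)))
    \<and> ((\<forall>A B. valid W R S (Imp (Box (Imp A B)) (Rhd A B)))
           \<longleftrightarrow> (\<forall>x\<in>W. \<forall>y\<in>W. (x, y) \<in> R \<longrightarrow> (y, y) \<in> S))
    \<and> ((\<forall>A B C. valid W R S (Imp (And (Rhd A (Or B C)) (Rhd B C)) (Rhd A C)))
           \<longleftrightarrow> (\<forall>x\<in>W. \<forall>y\<in>R `` {x}. \<forall>z\<in>R `` {x}. \<forall>v\<in>R `` {x}.
                  (y, z) \<in> S \<and> (z, v) \<in> S \<longrightarrow> (y, v) \<in> S))
    \<and> ((\<forall>A. valid W R S (Rhd (Dia A) A))
           \<longleftrightarrow> (\<forall>x\<in>W. \<forall>y\<in>W. \<forall>z\<in>W. (x, y) \<in> R \<and> (y, z) \<in> R \<longrightarrow> (y, z) \<in> S))"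
proof (intro conjI)
  show "\<forall>A B C. valid W R S (Imp (And (Rhd A C) (Rhd B C)) (Rhd (Or A B) C))" using p1 by blast
  show "\<forall>A B C. valid W R S (Imp (Box (Imp A B)) (Imp (Rhd C A) (Rhd C B)))" using p2 by blast
  show "\<forall>A. valid W R S (Iff (Box (Neg A)) (Rhd A Bot))" using p3 by blast
qed (rule p4 p5[OF assms] p6[OF assms])+

end
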